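(* Let $g$ be a nondegenerate symmetric bilinear form on $\mathbb{R}^n$ with $n_-(g)=1$, $R:[0,1]\to\mathcal L(\mathbb{R}^n)$ a continuous map of $g$-symmetric operators, $P\subset\mathbb{R}^n$ a subspace on which $g$ is nondegenerate, $S:P\to P$ $g$-symmetric, and $Y$ a solution of $Y''=RY$ with $g(Y,Y)<0$ on $[0,1]$. Then for all $t\in]0,1]$ the spaces $\mathcal K_t$ and $\mathcal S_t$ are orthogonal with respect to $I_t$; moreover $\hat{\mathcal K}_0$ and $\hat{\mathcal S}_0$ are orthogonal with respect to $C_0$.
   Context: For $t\in]0,1]$: $\mathcal H_t=\{V\in H^1([0,t],\mathbb{R}^n):V(0)\in P,V(t)=0\}$, $I_t(V,W)=\int_0^t[g(V',W')+g(RV,W)]ds-g(S[V(0)],W(0))$, $\mathcal K_t=\{V\in\mathcal H_t:g(V',Y)-g(V,Y')\text{ constant a.e. on }[0,t]\}$, $\mathcal S_t=\{f\,Y|_{[0,t]}:f\in H^1_0([0,t],\mathbb{R})\}$ ($H^1_0$: $H^1$ functions vanishing at both endpoints). $\mathcal H=\mathcal H_1$, $\hat{\mathcal K}_0=\{\hat V\in\mathcal H:g(\hat V',Y(0))\text{ constant a.e.}\}$, $\hat{\mathcal S}_0=\{\hat f\,Y(0):\hat f\in H^1_0([0,1],\mathbb{R})\}$, $C_0(\hat V,\hat W)=\int_0^1g(\hat V',\hat W')du$. *)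

theory Defs
  imports "HOL-Analysis.Analysis"
begin

definition gform :: "real^'n^'n \<Rightarrow> real^'n \<Rightarrow> real^'n \<Rightarrow> real" where
  "gform G x y = x \<bullet> (G *v y)"

definition sym_bilinear_nondeg :: "real^'n^'n \<Rightarrow> bool" where
  "sym_bilinear_nondeg G \<longleftrightarrow> (\<forall>x y. gform G x y = gform G y x)
     \<and> (\<forall>x. (\<forall>y. gform G x y = 0) \<longrightarrow> x = 0)"

definition neg_index :: "real^'n^'n \<Rightarrow> nat" where
  "neg_index G = Max {dim W | W. subspace W \<and> (\<forall>x\<in>W. x \<noteq> 0 \<longrightarrow> gform G x x < 0)}"

text \<open>H^1([0,t], E): V is absolutely continuous with square-integrable (weak) derivative V',
  i.e. V(s) = V(0) + int_0^s V' for s in [0,t]. V' is a representative of the weak derivative.\<close>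
definition H1 :: "real \<Rightarrow> (real \<Rightarrow> 'a::euclidean_space) \<Rightarrow> (real \<Rightarrow> 'a) \<Rightarrow> bool" where
  "H1 t V V' \<longleftrightarrow> set_borel_measurable lebesgue {0..t} V'
     \<and> set_integrable lebesgue {0..t} (\<lambda>s. (norm (V' s))\<^sup>2)
     \<and> (\<forall>s\<in>{0..t}. set_integrable lebesgue {0..s} V'
           \<and> V s = V 0 + (LINT u:{0..s}|lebesgue. V' u))"

definition Hsp :: "(real^'n) set \<Rightarrow> real \<Rightarrow> (real \<Rightarrow> real^'n) \<Rightarrow> (real \<Rightarrow> real^'n) \<Rightarrow> bool" where
  "Hsp P t V V' \<longleftrightarrow> H1 t V V' \<and> V 0 \<in> P \<and> V t = 0"

definition It :: "real^'n^'n \<Rightarrow> (real \<Rightarrow> real^'n^'n) \<Rightarrow> (real^'n \<Rightarrow> real^'n) \<Rightarrow> real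
    \<Rightarrow> (real \<Rightarrow> real^'n) \<Rightarrow> (real \<Rightarrow> real^'n) \<Rightarrow> (real \<Rightarrow> real^'n) \<Rightarrow> (real \<Rightarrow> real^'n) \<Rightarrow> real" where
  "It G R S t V V' W W' =
     (LINT s:{0..t}|lebesgue. gform G (V' s) (W' s) + gform G (R s *v V s) (W s))
     - gform G (S (V 0)) (W 0)"

definition Ksp :: "real^'n^'n \<Rightarrow> (real^'n) set \<Rightarrow> (real \<Rightarrow> real^'n) \<Rightarrow> (real \<Rightarrow> real^'n) \<Rightarrow> real
    \<Rightarrow> (real \<Rightarrow> real^'n) \<Rightarrow> (real \<Rightarrow> real^'n) \<Rightarrow> bool" where
  "Ksp G P Y Y' t V V' \<longleftrightarrow> Hsp P t V V'
     \<and> (\<exists>c. AE s in lebesgue. s \<in> {0..t} \<longrightarrow> gform G (V' s) (Y s) - gform G (V s) (Y' s) = c)"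

definition Ssp :: "(real \<Rightarrow> real^'n) \<Rightarrow> real \<Rightarrow> (real \<Rightarrow> real^'n) \<Rightarrow> (real \<Rightarrow> real^'n) \<Rightarrow> bool" where
  "Ssp Y t W W' \<longleftrightarrow> H1 t W W'
     \<and> (\<exists>f f'. H1 t f f' \<and> f 0 = 0 \<and> f t = 0 \<and> (\<forall>s\<in>{0..t}. W s = f s *\<^sub>R Y s))"

definition Khat0 :: "real^'n^'n \<Rightarrow> (real^'n) set \<Rightarrow> (real \<Rightarrow> real^'n)
    \<Rightarrow> (real \<Rightarrow> real^'n) \<Rightarrow> (real \<Rightarrow> real^'n) \<Rightarrow> bool" where
  "Khat0 G P Y V V' \<longleftrightarrow> Hsp P 1 V V'
     \<and> (\<exists>c. AE u in lebesgue. u \<in> {0..1} \<longrightarrow> gform G (V' u) (Y 0) = c)"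

definition Shat0 :: "(real \<Rightarrow> real^'n) \<Rightarrow> (real \<Rightarrow> real^'n) \<Rightarrow> (real \<Rightarrow> real^'n) \<Rightarrow> bool" where
  "Shat0 Y W W' \<longleftrightarrow> H1 1 W W'
     \<and> (\<exists>f f'. H1 1 f f' \<and> f 0 = 0 \<and> f 1 = 0 \<and> (\<forall>u\<in>{0..1}. W u = f u *\<^sub>R Y 0))"

definition C0 :: "real^'n^'n \<Rightarrow> (real \<Rightarrow> real^'n) \<Rightarrow> (real \<Rightarrow> real^'n) \<Rightarrow> real" where
  "C0 G V' W' = (LINT u:{0..1}|lebesgue. gform G (V' u) (W' u))"

end

theory Submission
  imports Defs
begin

lemma zero_tail_AE_lborel:
  fixes k :: "real \<Rightarrow> real"
  assumes kb[measurable]: "k \<in> borel_measurable borel" and ki: "integrable lborel k"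
    and z: "\<And>x. (\<integral>y. k y * indicator {x<..} y \<partial>lborel) = 0"
  shows "AE x in lborel. k x = 0"
proof -
  let ?p = "\<lambda>x. ennreal (max 0 (k x))" and ?n = "\<lambda>x. ennreal (max 0 (- k x))"
  have ip: "integrable lborel (\<lambda>y. max 0 (k y) * indicator {x<..} y)" for x :: real
    by (rule integrable_real_mult_indicator) (auto intro: ki)
  have in': "integrable lborel (\<lambda>y. max 0 (- k y) * indicator {x<..} y)" for x :: real
    by (rule integrable_real_mult_indicator) (auto intro!: integrable_max ki)
  have ea: "emeasure (density lborel ?p) {x<..} = ennreal (\<integral>y. max 0 (k y) * indicator {x<..} y \<partial>lborel)" for x
  proof -
    have "emeasure (density lborel ?p) {x<..} = (\<integral>\<^sup>+y. ennreal (max 0 (k y)) * indicator {x<..} y \<partial>lborel)"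
      by (subst emeasure_density) auto
    also have "\<dots> = (\<integral>\<^sup>+y. ennreal (max 0 (k y) * indicator {x<..} y) \<partial>lborel)"
      by (intro nn_integral_cong) (auto split: split_indicator)
    also have "\<dots> = ennreal (\<integral>y. max 0 (k y) * indicator {x<..} y \<partial>lborel)"
      by (intro nn_integral_eq_integral ip) auto
    finally show ?thesis .
  qed
  have eb: "emeasure (density lborel ?n) {x<..} = ennreal (\<integral>y. max 0 (- k y) * indicator {x<..} y \<partial>lborel)" for x
  proof -
    have "emeasure (density lborel ?n) {x<..} = (\<integral>\<^sup>+y. ennreal (max 0 (- k y)) * indicator {x<..} y \<partial>lborel)"
      by (subst emeasure_density) auto
    also have "\<dots> = (\<integral>\<^sup>+y. ennreal (max 0 (- k y) * indicator {x<..} y) \<partial>lborel)"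
      by (intro nn_integral_cong) (auto split: split_indicator)
    also have "\<dots> = ennreal (\<integral>y. max 0 (- k y) * indicator {x<..} y \<partial>lborel)"
      by (intro nn_integral_eq_integral in') auto
    finally show ?thesis .
  qed
  have "density lborel ?p = density lborel ?n"
  proof (rule measure_eqI_lessThan)
    fix x :: real
    show "emeasure (density lborel ?p) {x<..} < \<infinity>" unfolding ea by simp
    have mx: "max 0 r * i - max 0 (- r) * i = r * i" for r i :: real
      by (cases "0 \<le> r") (auto simp: max_def algebra_simps)
    have "(\<integral>y. max 0 (k y) * indicator {x<..} y \<partial>lborel) - (\<integral>y. max 0 (- k y) * indicator {x<..} y \<partial>lborel)
        = (\<integral>y. max 0 (k y) * indicator {x<..} y - max 0 (- k y) * indicator {x<..} y \<partial>lborel)"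
      by (rule Bochner_Integration.integral_diff[symmetric, OF ip in'])
    also have "\<dots> = (\<integral>y. k y * indicator {x<..} y \<partial>lborel)"
      by (simp only: mx)
    finally have "(\<integral>y. max 0 (k y) * indicator {x<..} y \<partial>lborel) - (\<integral>y. max 0 (- k y) * indicator {x<..} y \<partial>lborel)
        = (\<integral>y. k y * indicator {x<..} y \<partial>lborel)" .
    then show "emeasure (density lborel ?p) {x<..} = emeasure (density lborel ?n) {x<..}"
      unfolding ea eb z by simp
  qed auto
  then have "AE x in lborel. ?p x = ?n x"
    by (intro sigma_finite_measure.density_unique[OF sigma_finite_lborel]) auto
  then show ?thesis
    by eventually_elim (auto simp: max_def split: if_splits)
qed

lemma zero_indef_AE:
  fixes h :: "real \<Rightarrow> real"
  assumes hi: "set_integrable lebesgue {0..t} h"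
    and z: "\<forall>s\<in>{0..t}. (LINT u:{0..s}|lebesgue. h u) = 0"
  shows "AE x in lebesgue. x \<in> {0..t} \<longrightarrow> h x = 0"
proof -
  define k where "k x = indicator {0..t} x * h x" for x
  have ki: "integrable lebesgue k" using hi unfolding set_integrable_def k_def by simp
  then have kmeas[measurable]: "k \<in> borel_measurable lebesgue" by auto
  then obtain k0 where k0[measurable]: "k0 \<in> borel_measurable lborel" and ae: "AE x in lborel. k x = k0 x"
    using completion_ex_borel_measurable_real by blast
  have k0L[measurable]: "k0 \<in> borel_measurable lebesgue" using k0 by (rule measurable_completion)
  have aeL: "AE x in lebesgue. k x = k0 x" using ae by (rule AE_completion)
  have k0b: "k0 \<in> borel_measurable borel" using k0 by simp
  have "integrable lebesgue k0" by (rule integrable_cong_AE_imp[OF ki k0L aeL])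
  then have k0i: "integrable lborel k0" using integrable_completion k0 by blast
  have tail: "(\<integral>y. k0 y * indicator {x<..} y \<partial>lborel) = 0" for x
  proof -
    have "(\<integral>y. k0 y * indicator {x<..} y \<partial>lborel) = (\<integral>y. k0 y * indicator {x<..} y \<partial>lebesgue)"
      by (rule integral_completion[symmetric]) measurable
    also have "\<dots> = (\<integral>y. k y * indicator {x<..} y \<partial>lebesgue)"
      using aeL by (intro integral_cong_AE) (auto intro!: borel_measurable_times borel_measurable_indicator k0L kmeas)
    also have "\<dots> = 0"
    proof (cases "x < 0")
      case True
      have "(\<integral>y. k y * indicator {x<..} y \<partial>lebesgue) = (\<integral>y. k y \<partial>lebesgue)"
        using True by (intro Bochner_Integration.integral_cong) (auto simp: k_def indicator_def)
      also have "\<dots> = 0"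
      proof (cases "0 \<le> t")
        case True
        then show ?thesis using z by (auto simp: k_def set_lebesgue_integral_def)
      next
        case False
        then show ?thesis by (simp add: k_def)
      qed
      finally show ?thesis .
    next
      case x0: False
      show ?thesis
      proof (cases "x \<le> t")
        case True
        have hx: "set_integrable lebesgue {0..x} h"
          by (rule set_integrable_subset[OF hi]) (use True in auto)
        have "(\<integral>y. k y * indicator {x<..} y \<partial>lebesgue) = (\<integral>y. k y - indicator {0..x} y * h y \<partial>lebesgue)"
          using True x0 by (intro Bochner_Integration.integral_cong) (auto simp: k_def indicator_def)
        also have "\<dots> = (\<integral>y. k y \<partial>lebesgue) - (\<integral>y. indicator {0..x} y * h y \<partial>lebesgue)"
          using hx ki by (intro Bochner_Integration.integral_diff) (auto simp: set_integrable_def)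
        also have "\<dots> = 0"
          using z True x0 by (auto simp: k_def set_lebesgue_integral_def)
        finally show ?thesis .
      next
        case False
        have "(\<lambda>y. k y * indicator {x<..} y) = (\<lambda>y. 0)"
          using False by (auto simp: k_def indicator_def fun_eq_iff)
        then show ?thesis by simp
      qed
    qed
    finally show ?thesis .
  qed
  have "AE x in lborel. k0 x = 0" by (rule zero_tail_AE_lborel[OF k0b k0i tail])
  then have "AE x in lebesgue. k0 x = 0" by (rule AE_completion)
  with aeL show ?thesis by eventually_elim (auto simp: k_def)
qed

lemma sigma_finite_lebesgue: "sigma_finite_measure (lebesgue :: real measure)"
  unfolding sigma_finite_measure_def
proof (intro exI[of _ "range (\<lambda>n::nat. {-real n..real n})"] conjI)
  show "countable (range (\<lambda>n::nat. {-real n..real n}))" by (rule countable_image) simp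
  show "range (\<lambda>n::nat. {-real n..real n}) \<subseteq> sets lebesgue"
  proof
    fix a assume "a \<in> range (\<lambda>n::nat. {-real n..real n})"
    then obtain n :: nat where a: "a = {-real n..real n}" by blast
    show "a \<in> sets lebesgue" unfolding a by (rule sets_completionI_sets) simp
  qed
  show "\<Union> (range (\<lambda>n::nat. {-real n..real n})) = space lebesgue"
  proof (rule set_eqI)
    fix x :: real
    obtain n :: nat where "\<bar>x\<bar> \<le> real n" using real_arch_simple by blast
    then have "x \<in> {-real n..real n}" by (auto simp: abs_le_iff)
    then have u: "x \<in> \<Union> (range (\<lambda>n::nat. {-real n..real n}))" by blast
    have sp: "x \<in> space lebesgue" by simp
    from u sp show "x \<in> \<Union> (range (\<lambda>n::nat. {-real n..real n})) \<longleftrightarrow> x \<in> space lebesgue"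
      by blast
  qed
  show "\<forall>a\<in>range (\<lambda>n::nat. {-real n..real n}). emeasure lebesgue a \<noteq> \<infinity>"
  proof
    fix a assume "a \<in> range (\<lambda>n::nat. {-real n..real n})"
    then obtain n :: nat where a: "a = {-real n..real n}" by blast
    have "emeasure lebesgue a = emeasure lborel a" unfolding a
      by (subst emeasure_completion) (auto intro!: sets_completionI_sets simp: atLeastAtMost_borel)
    also have "\<dots> = ennreal (real n - - real n)" unfolding a by (rule emeasure_lborel_Icc) simp
    finally show "emeasure lebesgue a \<noteq> \<infinity>" by simp
  qed
qed

interpretation lebP: pair_sigma_finite "lebesgue :: real measure" "lebesgue :: real measure"
  by (intro pair_sigma_finite.intro sigma_finite_lebesgue)

lemma id_borel_lebesgue[measurable]: "(\<lambda>x::real. x) \<in> borel_measurable lebesgue"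
  by (rule measurable_completion) simp

lemma pair_pred_sets:
  "{p::real\<times>real. snd p \<le> fst p} \<in> sets (lebesgue \<Otimes>\<^sub>M lebesgue)"
  "{p::real\<times>real. fst p \<le> snd p} \<in> sets (lebesgue \<Otimes>\<^sub>M lebesgue)"
  "{p::real\<times>real. fst p = snd p} \<in> sets (lebesgue \<Otimes>\<^sub>M lebesgue)"
proof -
  have [measurable]: "fst \<in> borel_measurable (lebesgue \<Otimes>\<^sub>M lebesgue :: (real\<times>real) measure)"
    using measurable_compose[OF measurable_fst id_borel_lebesgue] by simp
  have [measurable]: "snd \<in> borel_measurable (lebesgue \<Otimes>\<^sub>M lebesgue :: (real\<times>real) measure)"
    using measurable_compose[OF measurable_snd id_borel_lebesgue] by simp
  have "Measurable.pred (lebesgue \<Otimes>\<^sub>M lebesgue) (\<lambda>p::real\<times>real. snd p \<le> fst p)" by measurable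
  then show "{p::real\<times>real. snd p \<le> fst p} \<in> sets (lebesgue \<Otimes>\<^sub>M lebesgue)"
    by (simp add: pred_def space_pair_measure)
  have "Measurable.pred (lebesgue \<Otimes>\<^sub>M lebesgue) (\<lambda>p::real\<times>real. fst p \<le> snd p)" by measurable
  then show "{p::real\<times>real. fst p \<le> snd p} \<in> sets (lebesgue \<Otimes>\<^sub>M lebesgue)"
    by (simp add: pred_def space_pair_measure)
  have "Measurable.pred (lebesgue \<Otimes>\<^sub>M lebesgue) (\<lambda>p::real\<times>real. fst p = snd p)" by measurable
  then show "{p::real\<times>real. fst p = snd p} \<in> sets (lebesgue \<Otimes>\<^sub>M lebesgue)"
    by (simp add: pred_def space_pair_measure)
qed

lemma ibp_core:
  fixes \<alpha> \<beta> :: "real \<Rightarrow> real"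
  assumes ai: "integrable lebesgue \<alpha>" and bi: "integrable lebesgue \<beta>"
  shows "(\<integral>s. \<alpha> s * (\<integral>u. \<beta> u * indicator {..s} u \<partial>lebesgue) \<partial>lebesgue)
       + (\<integral>u. \<beta> u * (\<integral>s. \<alpha> s * indicator {..u} s \<partial>lebesgue) \<partial>lebesgue)
       = (\<integral>s. \<alpha> s \<partial>lebesgue) * (\<integral>u. \<beta> u \<partial>lebesgue)"
    and "integrable lebesgue (\<lambda>s. \<alpha> s * (\<integral>u. \<beta> u * indicator {..s} u \<partial>lebesgue))"
    and "integrable lebesgue (\<lambda>u. \<beta> u * (\<integral>s. \<alpha> s * indicator {..u} s \<partial>lebesgue))"
proof -
  have am[measurable]: "\<alpha> \<in> borel_measurable lebesgue" using ai by auto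
  have bm[measurable]: "\<beta> \<in> borel_measurable lebesgue" using bi by auto
  define F where "F p = \<alpha> (fst p) * \<beta> (snd p)" for p :: "real \<times> real"
  have Fm[measurable]: "F \<in> borel_measurable (lebesgue \<Otimes>\<^sub>M lebesgue)"
    unfolding F_def by measurable
  have Fi: "integrable (lebesgue \<Otimes>\<^sub>M lebesgue) F"
  proof (rule lebP.Fubini_integrable[OF Fm])
    have "(\<lambda>x. \<integral>y. norm (F (x, y)) \<partial>lebesgue) = (\<lambda>x. \<bar>\<alpha> x\<bar> * (\<integral>y. \<bar>\<beta> y\<bar> \<partial>lebesgue))"
      by (auto simp: F_def abs_mult)
    then show "integrable lebesgue (\<lambda>x. \<integral>y. norm (F (x, y)) \<partial>lebesgue)"
      using ai by (auto intro!: integrable_mult_left)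
    show "AE x in lebesgue. integrable lebesgue (\<lambda>y. F (x, y))"
      using bi by (auto simp: F_def intro!: integrable_mult_right)
  qed
  note S = pair_pred_sets
  have F1i: "integrable (lebesgue \<Otimes>\<^sub>M lebesgue) (\<lambda>p. F p * indicator {p. snd p \<le> fst p} p)"
    by (rule integrable_real_mult_indicator[OF S(1) Fi])
  have F2i: "integrable (lebesgue \<Otimes>\<^sub>M lebesgue) (\<lambda>p. F p * indicator {p. fst p \<le> snd p} p)"
    by (rule integrable_real_mult_indicator[OF S(2) Fi])
  have F3i: "integrable (lebesgue \<Otimes>\<^sub>M lebesgue) (\<lambda>p. F p * indicator {p. fst p = snd p} p)"
    by (rule integrable_real_mult_indicator[OF S(3) Fi])
  have in1: "(\<integral>y. F (x, y) * indicator {p. snd p \<le> fst p} (x, y) \<partial>lebesgue) = \<alpha> x * (\<integral>u. \<beta> u * indicator {..x} u \<partial>lebesgue)" for x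
  proof -
    have "(\<integral>y. F (x, y) * indicator {p. snd p \<le> fst p} (x, y) \<partial>lebesgue) = (\<integral>y. \<alpha> x * (\<beta> y * indicator {..x} y) \<partial>lebesgue)"
      by (intro Bochner_Integration.integral_cong) (auto simp: F_def indicator_def)
    then show ?thesis by simp
  qed
  have T1: "(\<integral>s. \<alpha> s * (\<integral>u. \<beta> u * indicator {..s} u \<partial>lebesgue) \<partial>lebesgue)
      = integral\<^sup>L (lebesgue \<Otimes>\<^sub>M lebesgue) (\<lambda>p. F p * indicator {p. snd p \<le> fst p} p)"
    using lebP.integral_fst'[OF F1i] by (simp add: in1)
  show "integrable lebesgue (\<lambda>s. \<alpha> s * (\<integral>u. \<beta> u * indicator {..s} u \<partial>lebesgue))"
    using lebP.integrable_fst'[OF F1i] by (simp add: in1)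
  define G where "G s u = F (s, u) * indicator {p. fst p \<le> snd p} (s, u)" for s u
  have G2i: "integrable (lebesgue \<Otimes>\<^sub>M lebesgue) (case_prod G)"
    using F2i by (simp add: G_def case_prod_beta')
  have eqG: "case_prod G = (\<lambda>p. F p * indicator {p. fst p \<le> snd p} p)" by (auto simp: G_def fun_eq_iff)
  have in2: "(\<integral>x. G x y \<partial>lebesgue) = \<beta> y * (\<integral>s. \<alpha> s * indicator {..y} s \<partial>lebesgue)" for y
  proof -
    have "(\<integral>x. G x y \<partial>lebesgue) = (\<integral>x. \<beta> y * (\<alpha> x * indicator {..y} x) \<partial>lebesgue)"
      by (intro Bochner_Integration.integral_cong) (auto simp: G_def F_def indicator_def)
    then show ?thesis by simp
  qed
  have T2: "(\<integral>u. \<beta> u * (\<integral>s. \<alpha> s * indicator {..u} s \<partial>lebesgue) \<partial>lebesgue)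
      = integral\<^sup>L (lebesgue \<Otimes>\<^sub>M lebesgue) (\<lambda>p. F p * indicator {p. fst p \<le> snd p} p)"
    using lebP.integral_snd[OF G2i] unfolding eqG by (simp add: in2)
  show "integrable lebesgue (\<lambda>u. \<beta> u * (\<integral>s. \<alpha> s * indicator {..u} s \<partial>lebesgue))"
    using lebP.integrable_snd[OF G2i] by (simp add: in2)
  have "integral\<^sup>L (lebesgue \<Otimes>\<^sub>M lebesgue) (\<lambda>p. F p * indicator {p. snd p \<le> fst p} p)
      + integral\<^sup>L (lebesgue \<Otimes>\<^sub>M lebesgue) (\<lambda>p. F p * indicator {p. fst p \<le> snd p} p)
      = integral\<^sup>L (lebesgue \<Otimes>\<^sub>M lebesgue) (\<lambda>p. F p + F p * indicator {p. fst p = snd p} p)"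
    by (subst Bochner_Integration.integral_add[symmetric], rule F1i, rule F2i)
       (intro Bochner_Integration.integral_cong, auto simp: indicator_def)
  also have "\<dots> = integral\<^sup>L (lebesgue \<Otimes>\<^sub>M lebesgue) F + integral\<^sup>L (lebesgue \<Otimes>\<^sub>M lebesgue) (\<lambda>p. F p * indicator {p. fst p = snd p} p)"
    by (rule Bochner_Integration.integral_add[OF Fi F3i])
  also have "integral\<^sup>L (lebesgue \<Otimes>\<^sub>M lebesgue) F = (\<integral>s. \<alpha> s \<partial>lebesgue) * (\<integral>u. \<beta> u \<partial>lebesgue)"
  proof -
    have "integral\<^sup>L (lebesgue \<Otimes>\<^sub>M lebesgue) F = (\<integral>x. (\<integral>y. F (x, y) \<partial>lebesgue) \<partial>lebesgue)"
      using lebP.integral_fst'[OF Fi] by simp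
    also have "\<dots> = (\<integral>x. \<alpha> x * (\<integral>y. \<beta> y \<partial>lebesgue) \<partial>lebesgue)"
      by (simp add: F_def)
    finally show ?thesis by simp
  qed
  also have "integral\<^sup>L (lebesgue \<Otimes>\<^sub>M lebesgue) (\<lambda>p. F p * indicator {p. fst p = snd p} p) = 0"
  proof -
    have "integral\<^sup>L (lebesgue \<Otimes>\<^sub>M lebesgue) (\<lambda>p. F p * indicator {p. fst p = snd p} p)
        = (\<integral>x. (\<integral>y. F (x, y) * indicator {p. fst p = snd p} (x, y) \<partial>lebesgue) \<partial>lebesgue)"
      using lebP.integral_fst'[OF F3i] by simp
    also have "\<dots> = (\<integral>x. (0::real) \<partial>(lebesgue::real measure))"
    proof (rule Bochner_Integration.integral_cong[OF refl])
      fix x :: real assume "x \<in> space lebesgue"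
      have "AE y in lebesgue. y \<noteq> x"
        by (intro AE_completion AE_lborel_singleton)
      then have "(\<integral>y. F (x, y) * indicator {p. fst p = snd p} (x, y) \<partial>lebesgue) = (\<integral>y. (0::real) \<partial>(lebesgue::real measure))"
        by (intro integral_cong_AE) (auto simp: indicator_def)
      then show "(\<integral>y. F (x, y) * indicator {p. fst p = snd p} (x, y) \<partial>lebesgue) = 0" by simp
    qed
    finally show ?thesis by simp
  qed
  finally show "(\<integral>s. \<alpha> s * (\<integral>u. \<beta> u * indicator {..s} u \<partial>lebesgue) \<partial>lebesgue)
       + (\<integral>u. \<beta> u * (\<integral>s. \<alpha> s * indicator {..u} s \<partial>lebesgue) \<partial>lebesgue)
       = (\<integral>s. \<alpha> s \<partial>lebesgue) * (\<integral>u. \<beta> u \<partial>lebesgue)"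
    using T1 T2 by simp
qed

definition AC :: "real \<Rightarrow> (real \<Rightarrow> real) \<Rightarrow> (real \<Rightarrow> real) \<Rightarrow> bool" where
  "AC t a a' \<longleftrightarrow> set_integrable lebesgue {0..t} a'
     \<and> (\<forall>s\<in>{0..t}. a s = a 0 + (LINT u:{0..s}|lebesgue. a' u))"

lemma AC_cont:
  assumes "AC t a a'"
  shows "continuous_on {0..t} a"
proof -
  have i: "set_integrable lebesgue {0..t} a'" and e: "\<forall>s\<in>{0..t}. a s = a 0 + (LINT u:{0..s}|lebesgue. a' u)"
    using assms unfolding AC_def by blast+
  have "a' integrable_on {0..t}" using set_lebesgue_integral_eq_integral(1)[OF i] .
  then have "continuous_on {0..t} (\<lambda>s. integral {0..s} a')"
    by (rule indefinite_integral_continuous_1)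
  then have c: "continuous_on {0..t} (\<lambda>s. a 0 + integral {0..s} a')"
    by (rule continuous_on_add[OF continuous_on_const])
  have eq: "a s = a 0 + integral {0..s} a'" if "s \<in> {0..t}" for s
  proof -
    have "set_integrable lebesgue {0..s} a'" by (rule set_integrable_subset[OF i]) (use that in auto)
    then have "(LINT u:{0..s}|lebesgue. a' u) = integral {0..s} a'"
      by (rule set_lebesgue_integral_eq_integral(2))
    moreover have "a s = a 0 + (LINT u:{0..s}|lebesgue. a' u)" using e that by blast
    ultimately show ?thesis by linarith
  qed
  show ?thesis
  proof (rule continuous_on_eq[OF c])
    fix x assume x: "x \<in> {0..t}"
    show "a 0 + integral {0..x} a' = a x" by (rule eq[OF x, symmetric])
  qed
qed

lemma AC_int_mult:
  fixes t :: real and a' b :: "real \<Rightarrow> real"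
  assumes ai: "set_integrable lebesgue {0..t} a'" and bc: "continuous_on {0..t} b"
  shows "set_integrable lebesgue {0..t} (\<lambda>s. b s * a' s)"
proof -
  have S: "{0..t} \<in> sets lebesgue" by (intro sets_completionI_sets) (simp add: atLeastAtMost_borel)
  have bm: "b \<in> borel_measurable (lebesgue_on {0..t})"
    by (rule continuous_imp_measurable_on_sets_lebesgue[OF bc S])
  have bb: "bounded (b ` {0..t})" using compact_continuous_image[OF bc] compact_imp_bounded by auto
  show ?thesis
    using absolutely_integrable_bounded_measurable_product_real[OF bm S bb ai] .
qed

lemma AC_eqD: "AC t a a' \<Longrightarrow> s \<in> {0..t} \<Longrightarrow> a s = a 0 + (LINT u:{0..s}|lebesgue. a' u)"
  unfolding AC_def by blast

lemma AC_intD: "AC t a a' \<Longrightarrow> set_integrable lebesgue {0..t} a'"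
  unfolding AC_def by blast

lemma AC_restrict:
  assumes "AC t a a'" "0 \<le> s" "s \<le> t"
  shows "AC s a a'"
  unfolding AC_def
proof (intro conjI ballI)
  show "set_integrable lebesgue {0..s} a'"
    by (rule set_integrable_subset[OF AC_intD[OF assms(1)]]) (use assms in auto)
  fix u assume "u \<in> {0..s}"
  then have "u \<in> {0..t}" using assms by auto
  then show "a u = a 0 + (LINT u:{0..u}|lebesgue. a' u)" using AC_eqD[OF assms(1)] by blast
qed

lemma AC_indef:
  assumes "AC t a a'" "s \<in> {0..t}"
  shows "a s = a 0 + (\<integral>u. indicator {0..t} u * a' u * indicator {..s} u \<partial>lebesgue)"
proof -
  have "(LINT u:{0..s}|lebesgue. a' u) = (\<integral>u. indicator {0..t} u * a' u * indicator {..s} u \<partial>lebesgue)"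
    unfolding set_lebesgue_integral_def
    by (intro Bochner_Integration.integral_cong refl) (use assms(2) in \<open>auto simp: indicator_def\<close>)
  moreover have "a s = a 0 + (LINT u:{0..s}|lebesgue. a' u)" using AC_eqD assms by blast
  ultimately show ?thesis by linarith
qed

lemma IBP_end:
  assumes t: "0 \<le> t" and A: "AC t a a'" and B: "AC t b b'"
  shows "(LINT s:{0..t}|lebesgue. a' s * b s + a s * b' s) = a t * b t - a 0 * b 0"
proof -
  define \<alpha> where "\<alpha> s = indicator {0..t} s * a' s" for s
  define \<beta> where "\<beta> s = indicator {0..t} s * b' s" for s
  have ai: "integrable lebesgue \<alpha>" using AC_intD[OF A] unfolding set_integrable_def \<alpha>_def by simp
  have bi: "integrable lebesgue \<beta>" using AC_intD[OF B] unfolding set_integrable_def \<beta>_def by simp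
  define I1 where "I1 s = (\<integral>u. \<beta> u * indicator {..s} u \<partial>lebesgue)" for s
  define I2 where "I2 s = (\<integral>u. \<alpha> u * indicator {..s} u \<partial>lebesgue)" for s
  note core = ibp_core[OF ai bi, folded I1_def I2_def]
  have pw: "indicator {0..t} s *\<^sub>R (a' s * b s + a s * b' s) = (b 0 * \<alpha> s + \<alpha> s * I1 s) + (a 0 * \<beta> s + \<beta> s * I2 s)" for s
  proof (cases "s \<in> {0..t}")
    case True
    have "b s = b 0 + I1 s" using AC_indef[OF B True] unfolding I1_def \<beta>_def .
    moreover have "a s = a 0 + I2 s" using AC_indef[OF A True] unfolding I2_def \<alpha>_def .
    ultimately show ?thesis using True by (simp add: \<alpha>_def \<beta>_def algebra_simps)
  next
    case False
    then show ?thesis by (simp add: \<alpha>_def \<beta>_def)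
  qed
  have "(LINT s:{0..t}|lebesgue. a' s * b s + a s * b' s)
      = (\<integral>s. (b 0 * \<alpha> s + \<alpha> s * I1 s) + (a 0 * \<beta> s + \<beta> s * I2 s) \<partial>lebesgue)"
    unfolding set_lebesgue_integral_def pw ..
  also have "\<dots> = (b 0 * (\<integral>s. \<alpha> s \<partial>lebesgue) + (\<integral>s. \<alpha> s * I1 s \<partial>lebesgue))
      + (a 0 * (\<integral>s. \<beta> s \<partial>lebesgue) + (\<integral>s. \<beta> s * I2 s \<partial>lebesgue))"
    using ai bi core(2,3) by simp
  also have "\<dots> = b 0 * (\<integral>s. \<alpha> s \<partial>lebesgue) + a 0 * (\<integral>s. \<beta> s \<partial>lebesgue) + (\<integral>s. \<alpha> s \<partial>lebesgue) * (\<integral>s. \<beta> s \<partial>lebesgue)"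
    using core(1) by simp
  also have "\<dots> = a t * b t - a 0 * b 0"
  proof -
    have "a t = a 0 + (LINT u:{0..t}|lebesgue. a' u)" using AC_eqD[OF A, of t] t by simp
    then have ea: "a t = a 0 + (\<integral>s. \<alpha> s \<partial>lebesgue)"
      unfolding set_lebesgue_integral_def \<alpha>_def by simp
    have "b t = b 0 + (LINT u:{0..t}|lebesgue. b' u)" using AC_eqD[OF B, of t] t by simp
    then have eb: "b t = b 0 + (\<integral>s. \<beta> s \<partial>lebesgue)"
      unfolding set_lebesgue_integral_def \<beta>_def by simp
    from ea eb show ?thesis by (simp add: algebra_simps)
  qed
  finally show ?thesis .
qed

lemma AC_mult:
  assumes t: "0 \<le> t" and A: "AC t a a'" and B: "AC t b b'"
  shows "AC t (\<lambda>s. a s * b s) (\<lambda>s. a' s * b s + a s * b' s)"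
  unfolding AC_def
proof (intro conjI ballI)
  have i1: "set_integrable lebesgue {0..t} (\<lambda>s. b s * a' s)"
    using AC_int_mult[OF _ AC_cont[OF B]] A unfolding AC_def by blast
  have i2: "set_integrable lebesgue {0..t} (\<lambda>s. a s * b' s)"
    using AC_int_mult[OF _ AC_cont[OF A]] B unfolding AC_def by blast
  show "set_integrable lebesgue {0..t} (\<lambda>s. a' s * b s + a s * b' s)"
    using set_integral_add(1)[OF i1 i2] by (simp add: mult.commute)
  fix s assume s: "s \<in> {0..t}"
  have "(LINT u:{0..s}|lebesgue. a' u * b u + a u * b' u) = a s * b s - a 0 * b 0"
    using IBP_end[OF _ AC_restrict[OF A] AC_restrict[OF B]] s by auto
  then show "a s * b s = a 0 * b 0 + (LINT u:{0..s}|lebesgue. a' u * b u + a u * b' u)" by simp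
qed


lemma AC_add:
  assumes A: "AC t a a'" and B: "AC t b b'"
  shows "AC t (\<lambda>s. a s + b s) (\<lambda>s. a' s + b' s)"
  unfolding AC_def
proof (intro conjI ballI)
  show "set_integrable lebesgue {0..t} (\<lambda>s. a' s + b' s)"
    by (rule set_integral_add(1)[OF AC_intD[OF A] AC_intD[OF B]])
  fix s assume s: "s \<in> {0..t}"
  have ia: "set_integrable lebesgue {0..s} a'"
    by (rule set_integrable_subset[OF AC_intD[OF A]]) (use s in auto)
  have ib: "set_integrable lebesgue {0..s} b'"
    by (rule set_integrable_subset[OF AC_intD[OF B]]) (use s in auto)
  have "(LINT u:{0..s}|lebesgue. a' u + b' u) = (LINT u:{0..s}|lebesgue. a' u) + (LINT u:{0..s}|lebesgue. b' u)"
    by (rule set_integral_add(2)[OF ia ib])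
  moreover have "a s = a 0 + (LINT u:{0..s}|lebesgue. a' u)" by (rule AC_eqD[OF A s])
  moreover have "b s = b 0 + (LINT u:{0..s}|lebesgue. b' u)" by (rule AC_eqD[OF B s])
  ultimately show "a s + b s = a 0 + b 0 + (LINT u:{0..s}|lebesgue. a' u + b' u)" by linarith
qed

lemma AC_const: "AC t (\<lambda>s. k) (\<lambda>s. 0)"
  unfolding AC_def by (simp add: set_integrable_def)

lemma AC_sum:
  assumes "finite I" and "\<And>i. i \<in> I \<Longrightarrow> AC t (f i) (f' i)"
  shows "AC t (\<lambda>s. \<Sum>i\<in>I. f i s) (\<lambda>s. \<Sum>i\<in>I. f' i s)"
  using assms
proof (induction I rule: finite_induct)
  case empty
  then show ?case using AC_const[of t 0] by simp
next
  case (insert x F)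
  have "AC t (\<lambda>s. f x s + (\<Sum>i\<in>F. f i s)) (\<lambda>s. f' x s + (\<Sum>i\<in>F. f' i s))"
    by (rule AC_add) (use insert in auto)
  then show ?case using insert(1,2) by simp
qed

lemma AC_cong:
  assumes A: "AC t a a'" and t: "0 \<le> t"
    and e: "\<And>s. s \<in> {0..t} \<Longrightarrow> b s = a s" and e': "\<And>s. s \<in> {0..t} \<Longrightarrow> b' s = a' s"
  shows "AC t b b'"
  unfolding AC_def
proof (intro conjI ballI)
  have "(\<lambda>x. indicator {0..t} x *\<^sub>R b' x) = (\<lambda>x. indicator {0..t} x *\<^sub>R a' x)"
    by (rule ext) (auto simp: indicator_def e')
  then show "set_integrable lebesgue {0..t} b'"
    using AC_intD[OF A] unfolding set_integrable_def by simp
  fix s assume s: "s \<in> {0..t}"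
  have "(LINT u:{0..s}|lebesgue. b' u) = (LINT u:{0..s}|lebesgue. a' u)"
    by (rule set_lebesgue_integral_cong) (use s e' in auto)
  moreover have "b s = a s" "b 0 = a 0" using e s t by auto
  ultimately show "b s = b 0 + (LINT u:{0..s}|lebesgue. b' u)" using AC_eqD[OF A s] by simp
qed

lemma AC_unique:
  assumes t: "0 \<le> t" and A1: "AC t a a1" and A2: "AC t a a2"
  shows "AE x in lebesgue. x \<in> {0..t} \<longrightarrow> a1 x = a2 x"
proof -
  have hi: "set_integrable lebesgue {0..t} (\<lambda>x. a1 x - a2 x)"
    by (rule set_integral_diff(1)[OF AC_intD[OF A1] AC_intD[OF A2]])
  have z: "\<forall>s\<in>{0..t}. (LINT u:{0..s}|lebesgue. a1 u - a2 u) = 0"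
  proof
    fix s assume s: "s \<in> {0..t}"
    have ia: "set_integrable lebesgue {0..s} a1"
      by (rule set_integrable_subset[OF AC_intD[OF A1]]) (use s in auto)
    have ib: "set_integrable lebesgue {0..s} a2"
      by (rule set_integrable_subset[OF AC_intD[OF A2]]) (use s in auto)
    have "(LINT u:{0..s}|lebesgue. a1 u - a2 u) = (LINT u:{0..s}|lebesgue. a1 u) - (LINT u:{0..s}|lebesgue. a2 u)"
      by (rule set_integral_diff(2)[OF ia ib])
    moreover have "a s = a 0 + (LINT u:{0..s}|lebesgue. a1 u)" by (rule AC_eqD[OF A1 s])
    moreover have "a s = a 0 + (LINT u:{0..s}|lebesgue. a2 u)" by (rule AC_eqD[OF A2 s])
    ultimately show "(LINT u:{0..s}|lebesgue. a1 u - a2 u) = 0" by linarith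
  qed
  show ?thesis using zero_indef_AE[OF hi z] by eventually_elim auto
qed

lemma H1_AC:
  fixes V V' :: "real \<Rightarrow> 'a::euclidean_space"
  assumes H: "H1 t V V'" and t: "0 \<le> t"
  shows "AC t (\<lambda>s. V s \<bullet> c) (\<lambda>s. V' s \<bullet> c)"
  unfolding AC_def
proof (intro conjI ballI)
  have ii: "\<forall>s\<in>{0..t}. set_integrable lebesgue {0..s} V' \<and> V s = V 0 + (LINT u:{0..s}|lebesgue. V' u)"
    using H unfolding H1_def by blast
  have ix: "(\<lambda>x. indicator A x *\<^sub>R (V' x \<bullet> c)) = (\<lambda>x. (indicator A x *\<^sub>R V' x) \<bullet> c)" for A :: "real set"
    by (rule ext) simp
  have int: "set_integrable lebesgue A (\<lambda>s. V' s \<bullet> c)" if "set_integrable lebesgue A V'" for A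
    using that unfolding set_integrable_def ix by (rule integrable_inner_left)
  have eq: "(LINT u:A|lebesgue. V' u \<bullet> c) = (LINT u:A|lebesgue. V' u) \<bullet> c" if "set_integrable lebesgue A V'" for A
    using that unfolding set_integrable_def set_lebesgue_integral_def ix by (rule integral_inner_left)
  have "t \<in> {0..t}" using t by auto
  then have "set_integrable lebesgue {0..t} V'" using ii by blast
  then show "set_integrable lebesgue {0..t} (\<lambda>s. V' s \<bullet> c)" by (rule int)
  fix s assume s: "s \<in> {0..t}"
  then have "set_integrable lebesgue {0..s} V'" "V s = V 0 + (LINT u:{0..s}|lebesgue. V' u)" using ii by blast+
  then show "V s \<bullet> c = V 0 \<bullet> c + (LINT u:{0..s}|lebesgue. V' u \<bullet> c)"
    using eq by (simp add: inner_add_left)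
qed

lemma H1_AC_real:
  fixes f f' :: "real \<Rightarrow> real"
  assumes H: "H1 t f f'" and t: "0 \<le> t"
  shows "AC t f f'"
  using H1_AC[OF H t, of 1] by simp

lemma C1_AC:
  fixes y y' :: "real \<Rightarrow> real"
  assumes d: "\<forall>s\<in>{0..1}. (y has_vector_derivative y' s) (at s within {0..1})"
    and c: "continuous_on {0..1} y'" and t: "0 \<le> t" "t \<le> 1"
  shows "AC t y y'"
  unfolding AC_def
proof (intro conjI ballI)
  have ct: "continuous_on {0..t} y'" by (rule continuous_on_subset[OF c]) (use t in auto)
  show "set_integrable lebesgue {0..t} y'" by (rule absolutely_integrable_continuous_real[OF ct])
  fix s assume s: "s \<in> {0..t}"
  have cs: "continuous_on {0..s} y'" by (rule continuous_on_subset[OF c]) (use s t in auto)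
  have "(LINT u:{0..s}|lebesgue. y' u) = integral {0..s} y'"
    by (rule set_lebesgue_integral_eq_integral(2)[OF absolutely_integrable_continuous_real[OF cs]])
  moreover have "(y' has_integral (y s - y 0)) {0..s}"
  proof (rule fundamental_theorem_of_calculus)
    show "0 \<le> s" using s by auto
    fix x assume x: "x \<in> {0..s}"
    then have "x \<in> {0..1}" using s t by auto
    then have "(y has_vector_derivative y' x) (at x within {0..1})" using d by blast
    then show "(y has_vector_derivative y' x) (at x within {0..s})"
      by (rule has_vector_derivative_within_subset) (use s t in auto)
  qed
  then have "integral {0..s} y' = y s - y 0" by (rule integral_unique)
  ultimately show "y s = y 0 + (LINT u:{0..s}|lebesgue. y' u)" by simp
qed

lemma vd_inner:
  fixes f :: "real \<Rightarrow> 'a::real_inner"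
  assumes "(f has_vector_derivative f') F"
  shows "((\<lambda>x. f x \<bullet> c) has_vector_derivative (f' \<bullet> c)) F"
proof -
  have "((\<lambda>x. f x \<bullet> c) has_derivative (\<lambda>x. (x *\<^sub>R f') \<bullet> c)) F"
    using assms unfolding has_vector_derivative_def by (rule has_derivative_inner_left)
  then show ?thesis unfolding has_vector_derivative_def by (simp add: algebra_simps)
qed

lemma gsum:
  fixes G :: "real^'n^'n"
  shows "gform G x y = (\<Sum>b\<in>Basis. (x \<bullet> b) * (y \<bullet> (b v* G)))"
proof -
  have "gform G x y = (\<Sum>b\<in>Basis. (x \<bullet> b) * ((G *v y) \<bullet> b))"
    unfolding gform_def by (rule euclidean_inner)
  also have "\<dots> = (\<Sum>b\<in>Basis. (x \<bullet> b) * (y \<bullet> (b v* G)))"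
    by (intro sum.cong refl) (metis dot_lmul_matrix inner_commute)
  finally show ?thesis .
qed

lemma gform_lin2: "gform G x (a *\<^sub>R y + b *\<^sub>R z) = a * gform G x y + b * gform G x z"
  unfolding gform_def by (simp add: matrix_vector_right_distrib matrix_vector_mult_scaleR inner_add_right)

lemma gform_scale2: "gform G x (a *\<^sub>R y) = a * gform G x y"
  unfolding gform_def by (simp add: matrix_vector_mult_scaleR)

lemma gform_zero2: "gform G x 0 = 0"
  unfolding gform_def by simp

lemma sint_cong_AE:
  fixes f g :: "real \<Rightarrow> real"
  assumes gi: "set_integrable lebesgue A g" and ae: "AE x in lebesgue. x \<in> A \<longrightarrow> f x = g x"
  shows "(LINT x:A|lebesgue. f x) = (LINT x:A|lebesgue. g x)"
proof -
  have gm: "(\<lambda>x. indicator A x *\<^sub>R g x) \<in> borel_measurable lebesgue"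
    using gi unfolding set_integrable_def by auto
  have ae': "AE x in lebesgue. indicator A x *\<^sub>R g x = indicator A x *\<^sub>R f x"
    using ae by eventually_elim (auto simp: indicator_def)
  have fm: "(\<lambda>x. indicator A x *\<^sub>R f x) \<in> borel_measurable lebesgue"
    by (rule borel_measurable_AE[OF gm ae'])
  have ae'': "AE x in lebesgue. indicator A x *\<^sub>R f x = indicator A x *\<^sub>R g x"
    using ae by eventually_elim (auto simp: indicator_def)
  show ?thesis unfolding set_lebesgue_integral_def
    by (rule integral_cong_AE[OF fm gm ae''])
qed

lemma AE_vec_eq:
  fixes f g :: "real \<Rightarrow> 'a::euclidean_space"
  assumes "\<And>b. b \<in> Basis \<Longrightarrow> AE x in lebesgue. x \<in> A \<longrightarrow> f x \<bullet> b = g x \<bullet> b"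
  shows "AE x in lebesgue. x \<in> A \<longrightarrow> f x = g x"
proof -
  have "AE x in lebesgue. \<forall>b\<in>Basis. x \<in> A \<longrightarrow> f x \<bullet> b = g x \<bullet> b"
    by (rule eventually_ball_finite) (use assms in auto)
  then show ?thesis by eventually_elim (auto intro: euclidean_eqI)
qed

theorem lemma4p7:
  fixes G :: "real^'n^'n"
    and R :: "real \<Rightarrow> real^'n^'n"
    and P :: "(real^'n) set"
    and S :: "real^'n \<Rightarrow> real^'n"
    and Y Y' :: "real \<Rightarrow> real^'n"
  assumes g: "sym_bilinear_nondeg G"
    and idx: "neg_index G = 1"
    and Rcont: "continuous_on {0..1} R"
    and Rsym: "\<forall>s\<in>{0..1}. \<forall>x y. gform G (R s *v x) y = gform G x (R s *v y)"
    and Psub: "subspace P"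
    and Pnd: "\<forall>x\<in>P. (\<forall>y\<in>P. gform G x y = 0) \<longrightarrow> x = 0"
    and Slin: "linear S"
    and SP: "\<forall>x\<in>P. S x \<in> P"
    and Ssym: "\<forall>x\<in>P. \<forall>y\<in>P. gform G (S x) y = gform G x (S y)"
    and Yd: "\<forall>s\<in>{0..1}. (Y has_vector_derivative Y' s) (at s within {0..1})"
    and Ydd: "\<forall>s\<in>{0..1}. (Y' has_vector_derivative (R s *v Y s)) (at s within {0..1})"
    and Yneg: "\<forall>s\<in>{0..1}. gform G (Y s) (Y s) < 0"
  shows "(\<forall>t\<in>{0<..1}. \<forall>V V' W W'. Ksp G P Y Y' t V V' \<and> Ssp Y t W W'
            \<longrightarrow> It G R S t V V' W W' = 0)
       \<and> (\<forall>V V' W W'. Khat0 G P Y V V' \<and> Shat0 Y W W' \<longrightarrow> C0 G V' W' = 0)"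
proof (intro conjI ballI allI impI)
  have YC: "continuous_on {0..1} Y"
    unfolding continuous_on_eq_continuous_within using Yd has_vector_derivative_continuous by blast
  have Y'C: "continuous_on {0..1} Y'"
    unfolding continuous_on_eq_continuous_within using Ydd has_vector_derivative_continuous by blast
  have RYC: "continuous_on {0..1} (\<lambda>s. R s *v Y s)"
    unfolding matrix_vector_mult_def by (intro continuous_intros Rcont YC)
  have ACY: "AC t (\<lambda>s. Y s \<bullet> e) (\<lambda>s. Y' s \<bullet> e)" if "0 \<le> t" "t \<le> 1" for t e
  proof (rule C1_AC[OF _ _ that])
    show "\<forall>s\<in>{0..1}. ((\<lambda>s. Y s \<bullet> e) has_vector_derivative Y' s \<bullet> e) (at s within {0..1})"
      using Yd vd_inner by blast
    show "continuous_on {0..1} (\<lambda>s. Y' s \<bullet> e)" by (intro continuous_intros Y'C)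
  qed
  have ACY': "AC t (\<lambda>s. Y' s \<bullet> e) (\<lambda>s. (R s *v Y s) \<bullet> e)" if "0 \<le> t" "t \<le> 1" for t e
  proof (rule C1_AC[OF _ _ that])
    show "\<forall>s\<in>{0..1}. ((\<lambda>s. Y' s \<bullet> e) has_vector_derivative (R s *v Y s) \<bullet> e) (at s within {0..1})"
      using Ydd vd_inner by blast
    show "continuous_on {0..1} (\<lambda>s. (R s *v Y s) \<bullet> e)" by (intro continuous_intros RYC)
  qed

  fix t V V' W W'
  assume t: "t \<in> {0<..1}" and KS: "Ksp G P Y Y' t V V' \<and> Ssp Y t W W'"
  have t0: "0 \<le> t" and t1: "t \<le> 1" using t by auto
  have HV: "H1 t V V'" and V0P: "V 0 \<in> P" and Vt: "V t = 0"
    using KS unfolding Ksp_def Hsp_def by auto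
  obtain c where cAE: "AE s in lebesgue. s \<in> {0..t} \<longrightarrow> gform G (V' s) (Y s) - gform G (V s) (Y' s) = c"
    using KS unfolding Ksp_def by blast
  have HW: "H1 t W W'" using KS unfolding Ssp_def by blast
  obtain f f' where Hf: "H1 t f f'" and f0: "f 0 = 0" and ft: "f t = 0"
      and Wf: "\<forall>s\<in>{0..t}. W s = f s *\<^sub>R Y s"
    using KS unfolding Ssp_def by blast
  have ACf: "AC t f f'" by (rule H1_AC_real[OF Hf t0])
  have WAE: "AE s in lebesgue. s \<in> {0..t} \<longrightarrow> W' s = f' s *\<^sub>R Y s + f s *\<^sub>R Y' s"
  proof (rule AE_vec_eq)
    fix e :: "real^'n" assume "e \<in> Basis"
    have "AC t (\<lambda>s. f s * (Y s \<bullet> e)) (\<lambda>s. f' s * (Y s \<bullet> e) + f s * (Y' s \<bullet> e))"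
      by (rule AC_mult[OF t0 ACf ACY[OF t0 t1]])
    then have A1: "AC t (\<lambda>s. W s \<bullet> e) (\<lambda>s. f' s * (Y s \<bullet> e) + f s * (Y' s \<bullet> e))"
      by (rule AC_cong[OF _ t0]) (use Wf in auto)
    have A2: "AC t (\<lambda>s. W s \<bullet> e) (\<lambda>s. W' s \<bullet> e)" by (rule H1_AC[OF HW t0])
    show "AE s in lebesgue. s \<in> {0..t} \<longrightarrow> W' s \<bullet> e = (f' s *\<^sub>R Y s + f s *\<^sub>R Y' s) \<bullet> e"
      using AC_unique[OF t0 A2 A1] by eventually_elim (simp add: inner_add_left)
  qed
  define h where "h s = gform G (V s) (Y' s)" for s
  define h' where "h' s = gform G (V' s) (Y' s) + gform G (V s) (R s *v Y s)" for s
  have ACh: "AC t h h'"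
  proof -
    have "AC t (\<lambda>s. \<Sum>b\<in>Basis. (V s \<bullet> b) * (Y' s \<bullet> (b v* G)))
               (\<lambda>s. \<Sum>b\<in>Basis. (V' s \<bullet> b) * (Y' s \<bullet> (b v* G)) + (V s \<bullet> b) * ((R s *v Y s) \<bullet> (b v* G)))"
      by (rule AC_sum) (auto intro!: AC_mult[OF t0] H1_AC[OF HV t0] ACY'[OF t0 t1])
    then show ?thesis
      by (rule AC_cong[OF _ t0]) (simp_all add: h_def h'_def gsum sum.distrib)
  qed
  have ACfh: "AC t (\<lambda>s. f s * h s) (\<lambda>s. f' s * h s + f s * h' s)"
    by (rule AC_mult[OF t0 ACf ACh])
  have I1: "(LINT s:{0..t}|lebesgue. f' s * h s + f s * h' s) = 0"
    using AC_eqD[OF ACfh, of t] t0 f0 ft by simp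
  have I2: "(LINT s:{0..t}|lebesgue. f' s) = 0"
    using AC_eqD[OF ACf, of t] t0 f0 ft by simp
  have i1: "set_integrable lebesgue {0..t} (\<lambda>s. f' s * h s + f s * h' s)" by (rule AC_intD[OF ACfh])
  have i2: "set_integrable lebesgue {0..t} (\<lambda>s. c * f' s)" using AC_intD[OF ACf] by simp
  have pw: "AE s in lebesgue. s \<in> {0..t} \<longrightarrow>
      gform G (V' s) (W' s) + gform G (R s *v V s) (W s) = (f' s * h s + f s * h' s) + c * f' s"
    using WAE cAE
  proof eventually_elim
    case (elim s)
    show ?case
    proof
      assume s: "s \<in> {0..t}"
      then have s1: "s \<in> {0..1}" using t1 by auto
      have "gform G (V' s) (W' s) = f' s * gform G (V' s) (Y s) + f s * gform G (V' s) (Y' s)"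
        using elim s by (simp add: gform_lin2)
      moreover have "gform G (R s *v V s) (W s) = f s * gform G (V s) (R s *v Y s)"
        using Wf s Rsym s1 by (simp add: gform_scale2)
      moreover have "gform G (V' s) (Y s) = h s + c" using elim s by (simp add: h_def)
      ultimately show "gform G (V' s) (W' s) + gform G (R s *v V s) (W s) = (f' s * h s + f s * h' s) + c * f' s"
        by (simp add: h'_def algebra_simps)
    qed
  qed
  have "(LINT s:{0..t}|lebesgue. gform G (V' s) (W' s) + gform G (R s *v V s) (W s))
      = (LINT s:{0..t}|lebesgue. (f' s * h s + f s * h' s) + c * f' s)"
    by (rule sint_cong_AE[OF set_integral_add(1)[OF i1 i2] pw])
  also have "\<dots> = 0"
    using set_integral_add(2)[OF i1 i2] I1 I2 AC_intD[OF ACf] by simp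
  finally have "(LINT s:{0..t}|lebesgue. gform G (V' s) (W' s) + gform G (R s *v V s) (W s)) = 0" .
  moreover have "W 0 = 0" using Wf f0 t0 by auto
  ultimately show "It G R S t V V' W W' = 0" unfolding It_def by (simp add: gform_zero2)
next
  fix V V' W W'
  assume KS: "Khat0 G P Y V V' \<and> Shat0 Y W W'"
  obtain c where cAE: "AE u in lebesgue. u \<in> {0..1} \<longrightarrow> gform G (V' u) (Y 0) = c"
    using KS unfolding Khat0_def by blast
  have HW: "H1 1 W W'" using KS unfolding Shat0_def by blast
  obtain f f' where Hf: "H1 1 f f'" and f0: "f 0 = 0" and f1: "f 1 = 0"
      and Wf: "\<forall>u\<in>{0..1}. W u = f u *\<^sub>R Y 0"
    using KS unfolding Shat0_def by blast
  have ACf: "AC 1 f f'" by (rule H1_AC_real[OF Hf]) simp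
  have WAE: "AE s in lebesgue. s \<in> {0..1} \<longrightarrow> W' s = f' s *\<^sub>R Y 0"
  proof (rule AE_vec_eq)
    fix e :: "real^'n" assume "e \<in> Basis"
    have "AC 1 (\<lambda>s. f s * (Y 0 \<bullet> e)) (\<lambda>s. f' s * (Y 0 \<bullet> e) + f s * 0)"
      by (rule AC_mult[OF _ ACf AC_const]) simp
    then have A1: "AC 1 (\<lambda>s. W s \<bullet> e) (\<lambda>s. f' s * (Y 0 \<bullet> e))"
      by (rule AC_cong) (use Wf in auto)
    have A2: "AC 1 (\<lambda>s. W s \<bullet> e) (\<lambda>s. W' s \<bullet> e)" by (rule H1_AC[OF HW]) simp
    show "AE s in lebesgue. s \<in> {0..1} \<longrightarrow> W' s \<bullet> e = (f' s *\<^sub>R Y 0) \<bullet> e"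
      using AC_unique[OF _ A2 A1] by simp
  qed
  have i2: "set_integrable lebesgue {0..1} (\<lambda>s. c * f' s)" using AC_intD[OF ACf] by simp
  have pw: "AE s in lebesgue. s \<in> {0..1} \<longrightarrow> gform G (V' s) (W' s) = c * f' s"
    using WAE cAE by eventually_elim (auto simp: gform_scale2)
  have "C0 G V' W' = (LINT s:{0..1}|lebesgue. c * f' s)"
    unfolding C0_def by (rule sint_cong_AE[OF i2 pw])
  also have "\<dots> = c * (LINT s:{0..1}|lebesgue. f' s)" by simp
  also have "(LINT s:{0..1}|lebesgue. f' s) = 0"
    using AC_eqD[OF ACf, of 1] f0 f1 by simp
  finally show "C0 G V' W' = 0" by simp
qed

end
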